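(* Fix an initial cost $\omega \in \mathbb{R}^n$ and consider, for a step size $\alpha>0$, the sequence $(\omega_k)_{k\ge 0}$ defined below (under the stated tie-breaking convention). Then exactly one of the following holds: (i) $B(\omega)$ is non-empty, and there is $\alpha_{\max}>0$ such that for every $\alpha\in(0,\alpha_{\max})$ there exists $n\in\mathbb{N}$ with $y(\omega_n)\in B(\omega)$ and $y(\omega_k)=y(\omega)$ for all $k<n$; (ii) $B(\omega)$ is empty, and for every $\alpha>0$ we have $y(\omega_k)=y(\omega)$ for all $k\in\mathbb{N}$.
   Context: Let $Y\subset\mathbb{R}^n$ be a finite non-empty set. For $\omega\in\mathbb{R}^n$, $y(\omega)$ denotes a chosen element of $\operatorname{argmin}_{y\in Y}\langle \omega,y\rangle$ (the "solver"). Let $\ell:\mathbb{R}^n\to\mathbb{R}$ be differentiable and write $g(y)=\nabla \ell(y)$. Given $\omega\in\mathbb{R}^n$ and $\alpha>0$, define $\omega_0=\omega$ and $\omega_{k+1}=\omega_k+\alpha\, g(y(\omega_k))$ for $k\ge 0$ (i.e. $\omega_{k+1}=\omega_k-\alpha\Delta_k$ with the "Identity update" $\Delta_k=-g(y(\omega_k))$). Tie-breaking convention: for every $k\ge1$, if $y(\omega_{k-1})$ is a minimizer of $\langle \omega_k,\cdot\rangle$ over $Y$, then $y(\omega_k)=y(\omega_{k-1})$. Define the linearized loss at $y(\omega)$ by $f(y')=\ell(y(\omega))+\langle y'-y(\omega),\, g(y(\omega))\rangle$ for $y'\in Y$, and the set of better solutions $B(\omega)=\{y'\in Y: f(y')<f(y(\omega))\}$.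 *)

theory Defs
  imports "HOL-Analysis.Analysis"
begin

definition argmin_set :: "(real^'n) set \<Rightarrow> real^'n \<Rightarrow> (real^'n) set" where
  "argmin_set Y w = {v \<in> Y. \<forall>v'\<in>Y. w \<bullet> v \<le> w \<bullet> v'}"

primrec omega_seq :: "(real^'n \<Rightarrow> real^'n) \<Rightarrow> (real^'n \<Rightarrow> real^'n) \<Rightarrow> real
    \<Rightarrow> real^'n \<Rightarrow> nat \<Rightarrow> real^'n" where
  "omega_seq y g \<alpha> \<omega> 0 = \<omega>"
| "omega_seq y g \<alpha> \<omega> (Suc k) =
     omega_seq y g \<alpha> \<omega> k + \<alpha> *\<^sub>R g (y (omega_seq y g \<alpha> \<omega> k))"

definition lin_loss :: "(real^'n \<Rightarrow> real) \<Rightarrow> (real^'n \<Rightarrow> real^'n) \<Rightarrow> (real^'n \<Rightarrow> real^'n)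
    \<Rightarrow> real^'n \<Rightarrow> real^'n \<Rightarrow> real" where
  "lin_loss L g y \<omega> v = L (y \<omega>) + (v - y \<omega>) \<bullet> g (y \<omega>)"

definition better_set :: "(real^'n) set \<Rightarrow> (real^'n \<Rightarrow> real) \<Rightarrow> (real^'n \<Rightarrow> real^'n)
    \<Rightarrow> (real^'n \<Rightarrow> real^'n) \<Rightarrow> real^'n \<Rightarrow> (real^'n) set" where
  "better_set Y L g y \<omega> = {v \<in> Y. lin_loss L g y \<omega> v < lin_loss L g y \<omega> (y \<omega>)}"

end

theory Submission
  imports Defs
begin

theorem theorem1:
  fixes Y :: "(real^'n) set" and y :: "real^'n \<Rightarrow> real^'n"
    and L :: "real^'n \<Rightarrow> real" and g :: "real^'n \<Rightarrow> real^'n" and \<omega> :: "real^'n"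
  assumes "finite Y" and "Y \<noteq> {}"
    and solver: "\<forall>w. y w \<in> argmin_set Y w"
    and grad: "\<forall>x. (L has_derivative (\<lambda>h. g x \<bullet> h)) (at x)"
    and tie: "\<forall>\<alpha>>0. \<forall>k.
       y (omega_seq y g \<alpha> \<omega> k) \<in> argmin_set Y (omega_seq y g \<alpha> \<omega> (Suc k)) \<longrightarrow>
       y (omega_seq y g \<alpha> \<omega> (Suc k)) = y (omega_seq y g \<alpha> \<omega> k)"
  shows "(better_set Y L g y \<omega> \<noteq> {} \<and>
           (\<exists>\<alpha>max>0. \<forall>\<alpha>. 0 < \<alpha> \<and> \<alpha> < \<alpha>max \<longrightarrow>
              (\<exists>n. y (omega_seq y g \<alpha> \<omega> n) \<in> better_set Y L g y \<omega> \<and>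
                   (\<forall>k<n. y (omega_seq y g \<alpha> \<omega> k) = y \<omega>))))
       \<or> (better_set Y L g y \<omega> = {} \<and>
           (\<forall>\<alpha>>0. \<forall>k. y (omega_seq y g \<alpha> \<omega> k) = y \<omega>))"
proof -
  define y0 where "y0 = y \<omega>"
  define g0 where "g0 = g y0"
  have y0Y: "y0 \<in> Y" using solver unfolding argmin_set_def y0_def by blast
  have Beq: "better_set Y L g y \<omega> = {v \<in> Y. (v - y0) \<bullet> g0 < 0}"
    unfolding better_set_def lin_loss_def y0_def g0_def by auto
  have amin: "\<And>w. y w \<in> Y \<and> (\<forall>v'\<in>Y. w \<bullet> y w \<le> w \<bullet> v')"
    using solver unfolding argmin_set_def by blast
  have stay: "\<And>\<alpha> n. (\<forall>k\<le>n. y (omega_seq y g \<alpha> \<omega> k) = y0) \<Longrightarrow>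
      omega_seq y g \<alpha> \<omega> n = \<omega> + (real n * \<alpha>) *\<^sub>R g0"
  proof -
    fix \<alpha> n
    show "(\<forall>k\<le>n. y (omega_seq y g \<alpha> \<omega> k) = y0) \<Longrightarrow>
      omega_seq y g \<alpha> \<omega> n = \<omega> + (real n * \<alpha>) *\<^sub>R g0"
    proof (induction n)
      case 0 then show ?case by simp
    next
      case (Suc n)
      then have "omega_seq y g \<alpha> \<omega> n = \<omega> + (real n * \<alpha>) *\<^sub>R g0" by simp
      moreover have "y (omega_seq y g \<alpha> \<omega> n) = y0" using Suc.prems by simp
      ultimately show ?case by (simp add: g0_def algebra_simps scaleR_add_left)
    qed
  qed
  show ?thesis
  proof (cases "better_set Y L g y \<omega> = {}")
    case True
    then have nob: "\<forall>v\<in>Y. y0 \<bullet> g0 \<le> v \<bullet> g0" using Beq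
      by (auto simp: inner_diff_left not_less)
    have "\<forall>\<alpha>>0. \<forall>k. y (omega_seq y g \<alpha> \<omega> k) = y \<omega>"
    proof (intro allI impI)
      fix \<alpha> :: real and k assume a: "\<alpha> > 0"
      show "y (omega_seq y g \<alpha> \<omega> k) = y \<omega>"
      proof (induction k)
        case 0 then show ?case by simp
      next
        case (Suc k)
        let ?w = "omega_seq y g \<alpha> \<omega> k"
        have "y0 \<in> argmin_set Y (omega_seq y g \<alpha> \<omega> (Suc k))"
          unfolding argmin_set_def
        proof (safe intro!: y0Y)
          fix v' assume v: "v' \<in> Y"
          have "?w \<bullet> y0 \<le> ?w \<bullet> v'" using amin[of ?w] Suc.IH v y0_def by metis
          moreover have "\<alpha> * (g0 \<bullet> y0) \<le> \<alpha> * (g0 \<bullet> v')"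
            using nob v a by (metis inner_commute mult_left_mono less_imp_le)
          ultimately show "omega_seq y g \<alpha> \<omega> (Suc k) \<bullet> y0 \<le> omega_seq y g \<alpha> \<omega> (Suc k) \<bullet> v'"
            using Suc.IH by (simp add: y0_def g0_def inner_add_left)
        qed
        moreover have "y0 = y (omega_seq y g \<alpha> \<omega> k)" using Suc.IH y0_def by simp
        ultimately show ?case using tie a y0_def by simp
      qed
    qed
    then show ?thesis using True by blast
  next
    case False
    then obtain b where bY: "b \<in> Y" and bneg: "(b - y0) \<bullet> g0 < 0" using Beq by auto
    have "\<forall>\<alpha>. 0 < \<alpha> \<and> \<alpha> < 1 \<longrightarrow>
              (\<exists>n. y (omega_seq y g \<alpha> \<omega> n) \<in> better_set Y L g y \<omega> \<and>
                   (\<forall>k<n. y (omega_seq y g \<alpha> \<omega> k) = y \<omega>))"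
    proof (intro allI impI)
      fix \<alpha> :: real assume "0 < \<alpha> \<and> \<alpha> < 1"
      then have a: "\<alpha> > 0" by simp
      let ?P = "\<lambda>n. y (omega_seq y g \<alpha> \<omega> n) \<noteq> y0"
      have ex: "\<exists>n. ?P n"
      proof (rule ccontr)
        assume "\<not> (\<exists>n. ?P n)"
        then have all: "\<forall>n. y (omega_seq y g \<alpha> \<omega> n) = y0" by simp
        define c where "c = (b - y0) \<bullet> g0"
        have c: "c < 0" using bneg c_def by simp
        obtain n :: nat where n: "real n > (\<omega> \<bullet> (b - y0)) / (\<alpha> * (- c))"
          using reals_Archimedean2 by blast
        have pos: "\<alpha> * (- c) > 0" using a c by (simp add: mult_pos_neg)
        have "real n * (\<alpha> * (- c)) > \<omega> \<bullet> (b - y0)"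
          using n unfolding pos_divide_less_eq[OF pos] .
        moreover have "omega_seq y g \<alpha> \<omega> n \<bullet> y0 \<le> omega_seq y g \<alpha> \<omega> n \<bullet> b"
          using amin[of "omega_seq y g \<alpha> \<omega> n"] all bY by metis
        moreover have wn: "omega_seq y g \<alpha> \<omega> n = \<omega> + (real n * \<alpha>) *\<^sub>R g0"
          using stay all by blast
        moreover have "omega_seq y g \<alpha> \<omega> n \<bullet> b - omega_seq y g \<alpha> \<omega> n \<bullet> y0
            = \<omega> \<bullet> (b - y0) + real n * (\<alpha> * c)"
        proof -
          have "omega_seq y g \<alpha> \<omega> n \<bullet> b - omega_seq y g \<alpha> \<omega> n \<bullet> y0
              = omega_seq y g \<alpha> \<omega> n \<bullet> (b - y0)" by (simp add: inner_diff_right)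
          also have "\<dots> = \<omega> \<bullet> (b - y0) + (real n * \<alpha>) * (g0 \<bullet> (b - y0))"
            unfolding wn by (simp add: inner_add_left)
          also have "\<dots> = \<omega> \<bullet> (b - y0) + real n * (\<alpha> * c)"
            by (simp add: c_def inner_commute)
          finally show ?thesis .
        qed
        ultimately show False by linarith
      qed
      define n where "n = (LEAST n. ?P n)"
      have Pn: "?P n" unfolding n_def using ex by (rule LeastI_ex)
      have before: "\<And>k. k < n \<Longrightarrow> y (omega_seq y g \<alpha> \<omega> k) = y0"
        unfolding n_def by (drule not_less_Least) simp
      have "n \<noteq> 0"
      proof
        assume "n = 0"
        then have "y (omega_seq y g \<alpha> \<omega> n) = y0" unfolding y0_def by simp
        then show False using Pn by contradiction
      qed
      then obtain m where nm: "n = Suc m" using not0_implies_Suc by blast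
      have ym: "y (omega_seq y g \<alpha> \<omega> m) = y0" by (rule before) (simp add: nm)
      have notmin: "y0 \<notin> argmin_set Y (omega_seq y g \<alpha> \<omega> n)"
      proof
        assume "y0 \<in> argmin_set Y (omega_seq y g \<alpha> \<omega> n)"
        then have "y (omega_seq y g \<alpha> \<omega> m) \<in> argmin_set Y (omega_seq y g \<alpha> \<omega> (Suc m))"
          unfolding nm ym .
        then have "y (omega_seq y g \<alpha> \<omega> (Suc m)) = y (omega_seq y g \<alpha> \<omega> m)"
          using tie a by blast
        then show False using Pn unfolding nm ym by contradiction
      qed
      let ?wn = "omega_seq y g \<alpha> \<omega> n" and ?wm = "omega_seq y g \<alpha> \<omega> m"
      define v where "v = y ?wn"
      obtain v' where v': "v' \<in> Y" "?wn \<bullet> v' < ?wn \<bullet> y0"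
        using notmin y0Y unfolding argmin_set_def by (auto simp: not_le)
      have A: "v \<in> Y \<and> (\<forall>v''\<in>Y. ?wn \<bullet> v \<le> ?wn \<bullet> v'')" unfolding v_def by (rule amin)
      have vY: "v \<in> Y" using A by blast
      have vmin: "?wn \<bullet> v \<le> ?wn \<bullet> v'" using A v'(1) by blast
      have lt: "?wn \<bullet> v < ?wn \<bullet> y0" using vmin v' by linarith
      have ge: "?wm \<bullet> y0 \<le> ?wm \<bullet> v" using amin[of ?wm] vY unfolding ym by blast
      have wn: "?wn = ?wm + \<alpha> *\<^sub>R g0" unfolding nm omega_seq.simps ym g0_def ..
      have "\<alpha> * (g0 \<bullet> v) < \<alpha> * (g0 \<bullet> y0)" using lt ge unfolding wn
        by (simp add: inner_add_left)
      then have "g0 \<bullet> v < g0 \<bullet> y0" using a by simp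
      then have "(v - y0) \<bullet> g0 < 0" by (simp add: inner_commute[of _ g0] inner_diff_right)
      then have "v \<in> better_set Y L g y \<omega>" using Beq vY by simp
      then have "v \<in> better_set Y L g y \<omega>" 
        by (simp add: inner_diff_right)
      moreover have "\<forall>k<n. y (omega_seq y g \<alpha> \<omega> k) = y \<omega>" using before y0_def by simp
      ultimately show "\<exists>n. y (omega_seq y g \<alpha> \<omega> n) \<in> better_set Y L g y \<omega> \<and>
                   (\<forall>k<n. y (omega_seq y g \<alpha> \<omega> k) = y \<omega>)" using v_def by blast
    qed
    then have "\<exists>\<alpha>max>0. \<forall>\<alpha>. 0 < \<alpha> \<and> \<alpha> < \<alpha>max \<longrightarrow>
              (\<exists>n. y (omega_seq y g \<alpha> \<omega> n) \<in> better_set Y L g y \<omega> \<and>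
                   (\<forall>k<n. y (omega_seq y g \<alpha> \<omega> k) = y \<omega>))"
      by (intro exI[of _ 1]) simp
    then show ?thesis using False by (intro disjI1) simp
  qed
qed

end
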